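(* Let $x$ be a non-negative integer, $w$ a positive integer, and let $N_c$ be the least period of the sequence $(T_n^i(x)\bmod p^w)_{i\ge0}$. If $N_c\ge p^2$, then for every integer $k\ge w$ the least period of the sequence $(T_n^i(x)\bmod p^k)_{i\ge0}$ equals $N_c\cdot p^{k-w}$.
   Context: $p$ is a prime with $p>3$ and $n>1$ is an integer with $\gcd(n,p)=\gcd(n,p^2-1)=1$ (so $T_n$ permutes $\mathbb{Z}_{p^j}$ for all $j\ge1$). $T_n(x)\in\mathbb{Z}[x]$ is the Chebyshev polynomial of the first kind: $T_0=1$, $T_1=x$, $T_d=2xT_{d-1}-T_{d-2}$. $T_n^i$ is the $i$-fold composition of $T_n$ ($T_n^0(x)=x$). The least period of $(T_n^i(x)\bmod p^j)_{i\ge0}$ is the least positive integer $N$ with $T_n^N(x)\equiv x\pmod{p^j}$. *)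

theory Defs
  imports "HOL-Computational_Algebra.Polynomial" "HOL-Number_Theory.Cong"
begin

fun chebT :: "nat \<Rightarrow> int poly" where
  "chebT 0 = 1"
| "chebT (Suc 0) = [:0, 1:]"
| "chebT (Suc (Suc d)) = [:0, 2:] * chebT (Suc d) - chebT d"

definition chebT_iter :: "nat \<Rightarrow> nat \<Rightarrow> int \<Rightarrow> int" where
  "chebT_iter n i x = ((poly (chebT n)) ^^ i) x"

definition cheb_period :: "nat \<Rightarrow> int \<Rightarrow> int \<Rightarrow> nat" where
  "cheb_period n x m = (LEAST N. 0 < N \<and> [chebT_iter n N x = x] (mod m))"

end

theory Submission
  imports Defs "HOL-Number_Theory.Number_Theory"
begin

lemma poly_cong_int:
  fixes P :: "int poly"
  assumes "[a = b] (mod m)"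
  shows "[poly P a = poly P b] (mod m)"
proof (induction P rule: pCons_induct)
  case 0 then show ?case by simp
next
  case (pCons c P)
  then show ?case using assms by (simp add: cong_add cong_mult)
qed

lemma taylor_int:
  fixes P :: "int poly"
  shows "\<exists>r. poly P (y + e) = poly P y + e * poly (pderiv P) y + e^2 * r"
proof (induction P rule: pCons_induct)
  case 0 then show ?case by simp
next
  case (pCons c P)
  then obtain r where r: "poly P (y + e) = poly P y + e * poly (pderiv P) y + e^2 * r" by blast
  have h: "poly (pCons c P) (y + e) = c + (y+e) * (poly P y + e * poly (pderiv P) y + e^2 * r)"
    by (simp only: poly_pCons r)
  show ?case
    by (rule exI[of _ "poly (pderiv P) y + (y+e) * r"])
       (simp only: h, simp add: pderiv_pCons power2_eq_square algebra_simps)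
qed

definition der :: "nat \<Rightarrow> nat \<Rightarrow> int \<Rightarrow> int" where
  "der n N y = (\<Prod>i<N. poly (pderiv (chebT n)) ((poly (chebT n) ^^ i) y))"

lemma der_Suc: "der n (Suc N) y = poly (pderiv (chebT n)) ((poly (chebT n) ^^ N) y) * der n N y"
  by (simp add: der_def)

lemma funpow_cong_int:
  assumes "[a = b] (mod m)"
  shows "[(poly (chebT n) ^^ i) a = (poly (chebT n) ^^ i) b] (mod m)"
  by (induction i) (auto intro: poly_cong_int assms)

lemma taylor_iter:
  "\<exists>r. (poly (chebT n) ^^ N) (y + e) = (poly (chebT n) ^^ N) y + e * der n N y + e^2 * r"
proof (induction N)
  case 0 then show ?case by (simp add: der_def)
next
  case (Suc N)
  then obtain r where r: "(poly (chebT n) ^^ N) (y + e) = (poly (chebT n) ^^ N) y + e * der n N y + e^2 * r" by blast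
  define z where "z = (poly (chebT n) ^^ N) y"
  define \<delta> where "\<delta> = der n N y + e * r"
  have eq: "(poly (chebT n) ^^ N) (y + e) = z + e * \<delta>"
    using r by (simp add: z_def \<delta>_def power2_eq_square algebra_simps)
  obtain r' where r': "poly (chebT n) (z + e*\<delta>) = poly (chebT n) z + (e*\<delta>) * poly (pderiv (chebT n)) z + (e*\<delta>)^2 * r'"
    using taylor_int by blast
  have h: "(poly (chebT n) ^^ Suc N) (y + e) = poly (chebT n) z + (e*\<delta>) * poly (pderiv (chebT n)) z + (e*\<delta>)^2 * r'"
    by (simp only: funpow.simps comp_def eq r')
  show ?case
    by (rule exI[of _ "r * poly (pderiv (chebT n)) z + \<delta>^2 * r'"])
       (simp only: h, simp add: der_Suc z_def[symmetric] \<delta>_def power2_eq_square algebra_simps)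
qed

lemma der_add: "der n (a + b) y = der n a ((poly (chebT n) ^^ b) y) * der n b y"
proof (induction a)
  case 0 then show ?case by (simp add: der_def)
next
  case (Suc a)
  then show ?case by (simp add: der_Suc funpow_add)
qed

lemma der_cong:
  assumes "[y = y'] (mod m)"
  shows "[der n N y = der n N y'] (mod m)"
  unfolding der_def
  by (rule cong_prod) (intro poly_cong_int funpow_cong_int assms)

abbreviation "ff n \<equiv> poly (chebT n)"

lemma iter_mult_cong:
  assumes "[(ff n ^^ P) y = y] (mod M)"
  shows "[(ff n ^^ (P*q)) y = y] (mod M)"
proof (induction q)
  case 0 then show ?case by (metis cong_refl funpow_0 mult_0_right)
next
  case (Suc q)
  have "(ff n ^^ (P * Suc q)) y = (ff n ^^ P) ((ff n ^^ (P*q)) y)"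
    by (simp add: funpow_add)
  also have "[\<dots> = (ff n ^^ P) y] (mod M)" by (rule funpow_cong_int[OF Suc.IH])
  also have "[(ff n ^^ P) y = y] (mod M)" by (rule assms)
  finally show ?case .
qed

lemma period_props:
  assumes "0 < N0" "[chebT_iter n N0 x = x] (mod M)"
  shows "0 < cheb_period n x M" "[chebT_iter n (cheb_period n x M) x = x] (mod M)"
    "\<And>i. [chebT_iter n i x = x] (mod M) \<longleftrightarrow> cheb_period n x M dvd i"
proof -
  let ?Q = "\<lambda>N. 0 < N \<and> [chebT_iter n N x = x] (mod M)"
  have Q: "?Q (cheb_period n x M)" unfolding cheb_period_def
    by (rule LeastI[of ?Q N0]) (use assms in auto)
  then show "0 < cheb_period n x M" "[chebT_iter n (cheb_period n x M) x = x] (mod M)" by auto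
  fix i
  define P where "P = cheb_period n x M"
  have P: "0 < P" "[(ff n ^^ P) x = x] (mod M)" using Q by (auto simp: P_def chebT_iter_def)
  show "[chebT_iter n i x = x] (mod M) \<longleftrightarrow> cheb_period n x M dvd i"
  proof
    assume h: "[chebT_iter n i x = x] (mod M)"
    have "(ff n ^^ i) x = (ff n ^^ (i mod P)) ((ff n ^^ (P * (i div P))) x)"
      by (metis comp_apply funpow_add mod_mult_div_eq)
    also have "[\<dots> = (ff n ^^ (i mod P)) x] (mod M)"
      by (rule funpow_cong_int[OF iter_mult_cong[OF P(2)]])
    finally have "[(ff n ^^ (i mod P)) x = x] (mod M)" 
      using h unfolding chebT_iter_def by (metis cong_sym cong_trans)
    moreover have "i mod P < P" using P by simp
    ultimately have "\<not> 0 < i mod P"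
      using not_less_Least[of "i mod P" ?Q] unfolding P_def cheb_period_def chebT_iter_def by auto
    then show "cheb_period n x M dvd i" unfolding P_def[symmetric] by auto
  next
    assume "cheb_period n x M dvd i"
    then obtain q where "i = P * q" by (auto simp: P_def)
    then show "[chebT_iter n i x = x] (mod M)"
      using iter_mult_cong[OF P(2)] by (simp add: chebT_iter_def)
  qed
qed

lemma geo_Suc: "(\<Sum>l<Suc i. (c::int)^l) = 1 + c * (\<Sum>l<i. c^l)"
  by (subst sum.lessThan_Suc_shift) (simp add: sum_distrib_left)

lemma orbit_first:
  fixes p :: nat
  assumes j: "1 \<le> j" and hx: "(ff n ^^ N) x = x + int p^j * t"
  shows "\<exists>d. ((ff n ^^ N) ^^ i) x = x + int p^j * d \<and> [d = t * (\<Sum>l<i. (der n N x)^l)] (mod int p)"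
proof (induction i)
  case 0 then show ?case by (auto intro!: exI[of _ 0])
next
  case (Suc i)
  define c where "c = der n N x"
  define P where "P = int p ^ j"
  obtain d where d: "((ff n ^^ N) ^^ i) x = x + P * d" "[d = t * (\<Sum>l<i. c^l)] (mod int p)"
    using Suc.IH by (auto simp: c_def P_def)
  obtain r where r: "(ff n ^^ N) (x + P*d) = (ff n ^^ N) x + (P*d) * der n N x + (P*d)^2 * r"
    using taylor_iter by blast
  have eq: "((ff n ^^ N) ^^ Suc i) x = x + P * (t + d * c + P * d^2 * r)"
    by (simp only: funpow.simps comp_def d(1) r hx P_def[symmetric] c_def[symmetric])
       (simp add: power2_eq_square algebra_simps)
  have Pp: "[P = 0] (mod int p)" using j by (simp add: P_def cong_0_iff dvd_power)
  have "[t + d * c + P * d^2 * r = t + (t * (\<Sum>l<i. c^l)) * c + 0 * d^2 * r] (mod int p)"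
    by (intro cong_add cong_mult d(2) Pp cong_refl)
  also have "t + (t * (\<Sum>l<i. c^l)) * c + 0 * d^2 * r = t * (\<Sum>l<Suc i. c^l)"
    unfolding geo_Suc by (simp add: algebra_simps)
  finally show ?case using eq by (auto simp: P_def c_def)
qed

lemma orbit_second:
  fixes p :: nat
  assumes j: "2 \<le> j" and hx: "(ff n ^^ N) x = x + int p^j * t"
    and c: "der n N x = 1 + int p * e"
  shows "\<exists>d. ((ff n ^^ N) ^^ i) x = x + int p^j * d \<and>
     [2 * d = t * (2 * int i + int p * e * int i * (int i - 1))] (mod (int p)^2)"
proof (induction i)
  case 0 then show ?case by (auto intro!: exI[of _ 0])
next
  case (Suc i)
  define P where "P = int p ^ j"
  define Q where "Q = int p ^ (j - 2)"
  have PQ: "P = (int p)^2 * Q"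
  proof -
    have "int p ^ j = int p ^ (2 + (j-2))" using j by (metis le_add_diff_inverse)
    then show ?thesis by (simp add: P_def Q_def power_add power2_eq_square)
  qed
  obtain d where d: "((ff n ^^ N) ^^ i) x = x + P * d" 
     "[2 * d = t * (2 * int i + int p * e * int i * (int i - 1))] (mod (int p)^2)"
    using Suc.IH by (auto simp: P_def)
  obtain k where k: "2 * d = t * (2 * int i + int p * e * int i * (int i - 1)) + (int p)^2 * k"
    using d(2) by (metis cong_iff_lin cong_sym)
  obtain r where r: "(ff n ^^ N) (x + P*d) = (ff n ^^ N) x + (P*d) * der n N x + (P*d)^2 * r"
    using taylor_iter by blast
  define d' where "d' = t + d * (1 + int p * e) + P * d^2 * r"
  have eq: "((ff n ^^ N) ^^ Suc i) x = x + P * d'"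
    by (simp only: funpow.simps comp_def d(1) r hx P_def[symmetric] c d'_def)
       (simp add: power2_eq_square algebra_simps)
  have "2 * d' = 2 * t + (2 * d) * (1 + int p * e) + 2 * P * d^2 * r"
    by (simp add: d'_def algebra_simps)
  also have "\<dots> = t * (2 * int (Suc i) + int p * e * int (Suc i) * (int (Suc i) - 1))
       + (int p)^2 * (k + t * e^2 * int i * (int i - 1) + int p * k * e + 2 * Q * d^2 * r)"
    by (simp only: k PQ) (simp add: power2_eq_square algebra_simps)
  finally have "[2 * d' = t * (2 * int (Suc i) + int p * e * int (Suc i) * (int (Suc i) - 1))] (mod (int p)^2)"
    by (metis cong_iff_lin cong_sym)
  then show ?case using eq by (auto simp: P_def)
qed

lemma der_mult:
  assumes "[(ff n ^^ N) x = x] (mod M)"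
  shows "[der n (N*i) x = (der n N x)^i] (mod M)"
proof (induction i)
  case 0 then show ?case by (simp add: der_def cong_def)
next
  case (Suc i)
  have "der n (N * Suc i) x = der n N ((ff n ^^ (N*i)) x) * der n (N*i) x"
    by (simp add: der_add[symmetric] add.commute)
  also have "[\<dots> = der n N x * (der n N x)^i] (mod M)"
    by (intro cong_mult Suc.IH der_cong iter_mult_cong assms)
  finally show ?case by simp
qed

lemma fermat_int:
  fixes c :: int and p :: nat
  assumes "prime p" "\<not> int p dvd c"
  shows "[c^(p-1) = 1] (mod int p)"
proof -
  define a where "a = nat (c mod int p)"
  have p0: "int p > 0" using assms prime_gt_0_nat by auto
  have ca: "int a = c mod int p" using p0 by (simp add: a_def)
  have "\<not> p dvd a"
  proof
    assume "p dvd a"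
    then have "int p dvd c mod int p" using ca by (metis int_dvd_int_iff)
    then show False using assms(2) by (simp add: dvd_mod_iff)
  qed
  then have "[a^(p-1) = 1] (mod p)" using fermat_theorem assms(1) by blast
  then have "[int a^(p-1) = 1] (mod int p)" by (metis cong_int_iff of_nat_1 of_nat_power)
  moreover have "[c = int a] (mod int p)" using ca by (simp add: cong_def)
  ultimately show ?thesis by (meson cong_pow cong_trans)
qed

lemma level_step:
  fixes p :: nat
  assumes prime: "prime p" and j: "1 \<le> j"
    and E1: "0 < N1" "[chebT_iter n N1 x = x] (mod int p^j)"
    and E2: "0 < N2" "[chebT_iter n N2 x = x] (mod int p^Suc j)"
  defines "N \<equiv> cheb_period n x (int p^j)" and "N' \<equiv> cheb_period n x (int p^Suc j)"
    and "t \<equiv> (chebT_iter n (cheb_period n x (int p^j)) x - x) div int p^j"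
    and "c \<equiv> der n (cheb_period n x (int p^j)) x"
  shows "\<exists>m>0. N' = N*m \<and> [der n N' x = c^m] (mod int p) \<and>
           (\<forall>i. int p dvd t * (\<Sum>l<i. c^l) \<longleftrightarrow> m dvd i)"
proof -
  note A = period_props[OF E1, folded N_def]
  have t_def': "t = (chebT_iter n N x - x) div int p^j" and c_def': "c = der n N x"
    by (simp_all add: t_def c_def N_def)
  note B = period_props[OF E2, folded N'_def]
  have p0: "int p > 0" using prime prime_gt_0_nat by auto
  have "int p^j dvd chebT_iter n N x - x" using A(2) by (simp add: cong_iff_dvd_diff)
  then have hx: "(ff n ^^ N) x = x + int p^j * t"
    unfolding t_def' chebT_iter_def by (simp add: dvd_mult_div_cancel)
  have "[chebT_iter n N' x = x] (mod int p^j)"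
    by (rule cong_dvd_modulus[OF B(2)]) (simp add: le_imp_power_dvd)
  then have "N dvd N'" using A(3) by blast
  then obtain m where m: "N' = N * m" by blast
  have m0: "m > 0" using m B(1) by (cases m) auto
  have key: "[chebT_iter n (N*i) x = x] (mod int p^Suc j) \<longleftrightarrow> int p dvd t * (\<Sum>l<i. c^l)" for i
  proof -
    obtain d where d: "((ff n ^^ N) ^^ i) x = x + int p^j * d" "[d = t * (\<Sum>l<i. c^l)] (mod int p)"
      using orbit_first[OF j hx] unfolding c_def' by blast
    have "[chebT_iter n (N*i) x = x] (mod int p^Suc j) \<longleftrightarrow> int p^j * int p dvd int p^j * d"
      using d(1) by (simp add: chebT_iter_def funpow_mult cong_iff_dvd_diff mult.commute)
    also have "\<dots> \<longleftrightarrow> int p dvd d" using p0 by simp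
    also have "\<dots> \<longleftrightarrow> int p dvd t * (\<Sum>l<i. c^l)" using d(2) by (rule cong_dvd_iff)
    finally show ?thesis .
  qed
  have key2: "[chebT_iter n (N*i) x = x] (mod int p^Suc j) \<longleftrightarrow> m dvd i" for i
    using B(3)[of "N*i"] A(1) m by simp
  have "[chebT_iter n N x = x] (mod int p)"
    by (rule cong_dvd_modulus[OF A(2)]) (use j in \<open>simp add: dvd_power\<close>)
  then have "[der n N' x = c^m] (mod int p)"
    unfolding m c_def' by (intro der_mult) (simp add: chebT_iter_def)
  then show ?thesis using m m0 key key2 by blast
qed

lemma star_cases:
  fixes p :: nat and t c :: int
  assumes prime: "prime p" and m0: "m > 0"
    and star: "\<And>i. int p dvd t * (\<Sum>l<i. c^l) \<longleftrightarrow> m dvd i"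
  shows "int p dvd t \<Longrightarrow> m = 1"
    and "\<not> int p dvd t \<Longrightarrow> [c = 1] (mod int p) \<Longrightarrow> m = p"
    and "\<not> int p dvd t \<Longrightarrow> \<not> [c = 1] (mod int p) \<Longrightarrow> m \<le> p - 1 \<and> [c^m = 1] (mod int p)"
proof -
  have pp: "prime (int p)" using prime by simp
  show "int p dvd t \<Longrightarrow> m = 1" using star[of 1] by simp
  show "m = p" if nt: "\<not> int p dvd t" and c1: "[c = 1] (mod int p)"
  proof -
    have S: "[(\<Sum>l<i. c^l) = (\<Sum>l<i. 1)] (mod int p)" for i
      by (intro cong_sum) (metis c1 cong_pow power_one)
    have e1: "int p dvd t * (\<Sum>l<i. c^l) \<longleftrightarrow> int p dvd t * int i" for i
      using cong_dvd_iff[OF cong_mult[OF cong_refl[of t] S[of i]]] by simp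
    have e2: "int p dvd t * int i \<longleftrightarrow> p dvd i" for i using pp nt
      by (simp add: prime_dvd_mult_iff)
    have pm: "p dvd i \<longleftrightarrow> m dvd i" for i using star[of i] e1[of i] e2[of i] by blast
    have "p dvd m" using pm[of m] by simp
    moreover have "m dvd p" using pm[of p] by simp
    ultimately show ?thesis by (rule dvd_antisym[rotated])
  qed
  show "m \<le> p - 1 \<and> [c^m = 1] (mod int p)" if nt: "\<not> int p dvd t" and c1: "\<not> [c = 1] (mod int p)"
  proof -
    have nc1: "\<not> int p dvd (c - 1)" using c1 by (simp add: cong_iff_dvd_diff)
    have "int p dvd t * (\<Sum>l<m. c^l)" using star by simp
    then have "int p dvd (\<Sum>l<m. c^l)" using pp nt by (simp add: prime_dvd_mult_iff)
    then have "int p dvd c^m - 1" by (simp add: power_diff_1_eq)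
    then have cm: "[c^m = 1] (mod int p)" by (simp add: cong_iff_dvd_diff)
    have "\<not> int p dvd c"
    proof
      assume "int p dvd c"
      then have "int p dvd c^m" using m0 by (metis dvd_power dvd_trans)
      then have "int p dvd 1" using \<open>int p dvd c^m - 1\<close> by (metis dvd_diff_right_iff)
      then show False using pp by (simp add: prime_int_iff)
    qed
    then have "[c^(p-1) = 1] (mod int p)" using fermat_int prime by blast
    then have "int p dvd (c - 1) * (\<Sum>l<p-1. c^l)" by (simp add: cong_iff_dvd_diff power_diff_1_eq)
    then have "int p dvd (\<Sum>l<p-1. c^l)" using pp nc1 by (simp add: prime_dvd_mult_iff)
    then have "m dvd p - 1" using star by (metis dvd_mult)
    moreover have "p - 1 > 0" using prime prime_gt_1_nat by simp
    ultimately show ?thesis using cm by (simp add: dvd_imp_le)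
  qed
qed

lemma level_good:
  fixes p :: nat and t :: int
  assumes prime: "prime p" and p3: "p > 2" and j: "2 \<le> j"
    and hx: "(ff n ^^ N) x = x + int p^j * t"
    and nt: "\<not> int p dvd t" and c1: "[der n N x = 1] (mod int p)"
  shows "\<not> int p dvd ((chebT_iter n (N*p) x - x) div int p^Suc j)"
proof -
  define c where "c = der n N x"
  define e where "e = (c - 1) div int p"
  have ce: "c = 1 + int p * e" using c1 unfolding c_def[symmetric] e_def
    by (simp add: cong_iff_dvd_diff dvd_mult_div_cancel cong_sym_eq)
  obtain d where d: "((ff n ^^ N) ^^ p) x = x + int p^j * d"
     "[2 * d = t * (2 * int p + int p * e * int p * (int p - 1))] (mod (int p)^2)"
    using orbit_second[OF j hx ce[unfolded c_def]] by blast
  obtain k where k: "t * (2 * int p + int p * e * int p * (int p - 1)) = 2 * d + (int p)^2 * k"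
    using d(2) by (metis cong_iff_lin)
  have "2 * (d - t * int p) = (int p)^2 * (t * e * (int p - 1) - k)"
    using k by (simp add: power2_eq_square algebra_simps)
  then have "(int p)^2 dvd (d - t * int p) * 2" by (metis dvd_triv_left mult.commute)
  moreover have "coprime ((int p)^2) 2"
  proof -
    have "odd p" using prime p3 by (rule prime_odd_nat)
    then show ?thesis by simp
  qed
  ultimately have "(int p)^2 dvd d - t * int p" using coprime_dvd_mult_left_iff by blast
  then obtain z where z: "d = t * int p + (int p)^2 * z" by (metis dvd_def diff_eq_eq add.commute)
  have "chebT_iter n (N*p) x - x = int p^Suc j * (t + int p * z)"
    using d(1) unfolding chebT_iter_def funpow_mult z by (simp add: power2_eq_square algebra_simps)
  then have "(chebT_iter n (N*p) x - x) div int p^Suc j = t + int p * z"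
    using prime prime_gt_0_nat by simp
  then show ?thesis using nt by (simp add: dvd_add_left_iff)
qed

lemma cheb_at_1: "poly (chebT m) 1 = (1::int)"
  by (induction m rule: chebT.induct) auto

lemma iter_at_1: "(ff n ^^ i) 1 = 1"
  by (induction i) (auto simp: cheb_at_1)

lemma period1_bound:
  fixes p :: nat
  assumes prime: "prime p" and E: "0 < N0" "[chebT_iter n N0 x = x] (mod int p)"
  shows "cheb_period n x (int p) \<le> p - 1"
proof -
  define N where "N = cheb_period n x (int p)"
  note A = period_props[OF E, folded N_def]
  have p2: "p \<ge> 2" using prime prime_ge_2_nat by blast
  show ?thesis
  proof (cases "N = 1")
    case True then show ?thesis using p2 by (simp add: N_def)
  next
    case False
    have bk: "[chebT_iter n (N - i + i') x = chebT_iter n (N - i) y] (mod int p)"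
      if "[chebT_iter n i' x = y] (mod int p)" "i \<le> N" for i i' y
    proof -
      have "chebT_iter n (N - i + i') x = (ff n ^^ (N - i)) (chebT_iter n i' x)"
        by (simp add: chebT_iter_def funpow_add)
      also have "[\<dots> = (ff n ^^ (N - i)) y] (mod int p)" by (rule funpow_cong_int[OF that(1)])
      finally show ?thesis by (simp add: chebT_iter_def)
    qed
    define g where "g i = chebT_iter n i x mod int p" for i
    have inj: "inj_on g {..<N}"
    proof (rule inj_onI)
      fix i i' assume i: "i \<in> {..<N}" and i': "i' \<in> {..<N}" and eq: "g i = g i'"
      show "i = i'"
      proof (rule ccontr)
        assume ne: "i \<noteq> i'"
        have gen: "False" if lt: "a < b" "b < N" "[chebT_iter n a x = chebT_iter n b x] (mod int p)" for a b
        proof -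
          have "[chebT_iter n (N - b + a) x = chebT_iter n (N - b) (chebT_iter n b x)] (mod int p)"
            using bk[OF lt(3)] lt by simp
          also have "chebT_iter n (N - b) (chebT_iter n b x) = chebT_iter n N x"
          proof -
            have "N = (N - b) + b" using lt by simp
            then show ?thesis unfolding chebT_iter_def by (metis comp_apply funpow_add)
          qed
          also have "[\<dots> = x] (mod int p)" by (rule A(2))
          finally have "N dvd N - b + a" using A(3) by blast
          moreover have "0 < N - b + a" "N - b + a < N" using lt by auto
          ultimately show False by (simp add: nat_dvd_not_less)
        qed
        have c: "[chebT_iter n i x = chebT_iter n i' x] (mod int p)" using eq by (simp add: g_def cong_def)
        show False
        proof (cases "i < i'")
          case True then show False using gen[OF True _ c] i' by simp
        next
          case False then have "i' < i" using ne by simp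
          then show False using gen[OF \<open>i' < i\<close> _ cong_sym[OF c]] i by simp
        qed
      qed
    qed
    have img: "g ` {..<N} \<subseteq> {0..<int p} - {1}"
    proof
      fix y assume "y \<in> g ` {..<N}"
      then obtain i where i: "i < N" "y = g i" by auto
      have "0 \<le> y" "y < int p" using i prime_gt_0_nat[OF prime] by (auto simp: g_def)
      moreover have "y \<noteq> 1"
      proof
        assume "y = 1"
        then have c: "[chebT_iter n i x = 1] (mod int p)" using i p2 by (simp add: g_def cong_def)
        have "[chebT_iter n (N - i + i) x = chebT_iter n (N - i) 1] (mod int p)"
          using bk[OF c, of i] i by simp
        then have "[x = 1] (mod int p)"
          using i A(2) by (simp add: chebT_iter_def iter_at_1) (metis cong_sym cong_trans)
        then have "[chebT_iter n 1 x = 1] (mod int p)"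
          using poly_cong_int[OF \<open>[x = 1] (mod int p)\<close>, of "chebT n"] by (simp add: chebT_iter_def cheb_at_1)
        then have "[chebT_iter n 1 x = x] (mod int p)" using \<open>[x = 1] (mod int p)\<close>
          by (metis cong_sym cong_trans)
        then have "N dvd 1" using A(3) by blast
        then show False using False by simp
      qed
      ultimately show "y \<in> {0..<int p} - {1}" by auto
    qed
    have "N = card (g ` {..<N})" using inj by (simp add: card_image)
    also have "\<dots> \<le> card ({0..<int p} - {1})" by (rule card_mono[OF _ img]) simp
    also have "\<dots> = p - 1" using p2 by simp
    finally show ?thesis by (simp add: N_def)
  qed
qed

definition Nl :: "nat \<Rightarrow> int \<Rightarrow> nat \<Rightarrow> nat \<Rightarrow> nat" where
  "Nl n x p j = cheb_period n x (int p ^ j)"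
definition tl' :: "nat \<Rightarrow> int \<Rightarrow> nat \<Rightarrow> nat \<Rightarrow> int" where
  "tl' n x p j = (chebT_iter n (Nl n x p j) x - x) div int p ^ j"
definition cl :: "nat \<Rightarrow> int \<Rightarrow> nat \<Rightarrow> nat \<Rightarrow> int" where
  "cl n x p j = der n (Nl n x p j) x"

definition Good where
  "Good n x p j \<longleftrightarrow> 2 \<le> j \<and> \<not> int p dvd tl' n x p j \<and> [cl n x p j = 1] (mod int p)"
definition Inv where
  "Inv n x p j \<longleftrightarrow> Good n x p j \<or> (\<not> [cl n x p j = 1] (mod int p) \<and> Nl n x p j \<le> p - 1)
     \<or> ([cl n x p j = 1] (mod int p) \<and> Nl n x p j \<le> p * (p - 1) \<and> (j = 1 \<longrightarrow> Nl n x p j \<le> p - 1))"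

lemma step_facts:
  fixes p :: nat
  assumes prime: "prime p" and j: "1 \<le> j"
    and EX: "\<And>j. 1 \<le> j \<Longrightarrow> \<exists>N>0. [chebT_iter n N x = x] (mod int p^j)"
  obtains m where "m > 0" "Nl n x p (Suc j) = Nl n x p j * m"
    "[cl n x p (Suc j) = (cl n x p j)^m] (mod int p)"
    "int p dvd tl' n x p j \<Longrightarrow> m = 1"
    "\<not> int p dvd tl' n x p j \<Longrightarrow> [cl n x p j = 1] (mod int p) \<Longrightarrow> m = p"
    "\<not> int p dvd tl' n x p j \<Longrightarrow> \<not> [cl n x p j = 1] (mod int p) \<Longrightarrow> m \<le> p - 1 \<and> [(cl n x p j)^m = 1] (mod int p)"
proof -
  obtain N1 where N1: "N1 > 0" "[chebT_iter n N1 x = x] (mod int p^j)" using EX[OF j] by blast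
  obtain N2 where N2: "N2 > 0" "[chebT_iter n N2 x = x] (mod int p^Suc j)" using EX[of "Suc j"] by auto
  obtain m where m: "m > 0" "Nl n x p (Suc j) = Nl n x p j * m"
    "[cl n x p (Suc j) = (cl n x p j)^m] (mod int p)"
    "\<And>i. int p dvd tl' n x p j * (\<Sum>l<i. (cl n x p j)^l) \<longleftrightarrow> m dvd i"
    using level_step[OF prime j N1 N2] unfolding Nl_def tl'_def cl_def by blast
  show ?thesis
    by (rule that[OF m(1-3)]) (use star_cases[OF prime m(1) m(4)] in auto)
qed

lemma hx_level:
  fixes p :: nat
  assumes "0 < N1" "[chebT_iter n N1 x = x] (mod int p^j)"
  shows "(ff n ^^ Nl n x p j) x = x + int p^j * tl' n x p j"
proof -
  have "[chebT_iter n (Nl n x p j) x = x] (mod int p^j)"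
    using period_props(2)[OF assms] by (simp add: Nl_def)
  then have "int p^j dvd chebT_iter n (Nl n x p j) x - x" by (simp add: cong_iff_dvd_diff)
  then show ?thesis unfolding tl'_def chebT_iter_def by (simp add: dvd_mult_div_cancel)
qed

lemma good_step:
  fixes p :: nat
  assumes prime: "prime p" and p2: "p > 2"
    and EX: "\<And>j. 1 \<le> j \<Longrightarrow> \<exists>N>0. [chebT_iter n N x = x] (mod int p^j)"
    and G: "Good n x p j"
  shows "Good n x p (Suc j) \<and> Nl n x p (Suc j) = p * Nl n x p j"
proof -
  have j: "1 \<le> j" "2 \<le> j" using G by (auto simp: Good_def)
  have nt: "\<not> int p dvd tl' n x p j" and c1: "[cl n x p j = 1] (mod int p)" using G by (auto simp: Good_def)
  obtain m where m: "m > 0" "Nl n x p (Suc j) = Nl n x p j * m"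
    "[cl n x p (Suc j) = (cl n x p j)^m] (mod int p)"
    "\<not> int p dvd tl' n x p j \<Longrightarrow> [cl n x p j = 1] (mod int p) \<Longrightarrow> m = p"
    using step_facts[OF prime j(1) EX] by metis
  have mp: "m = p" using m(4) nt c1 by blast
  have c1': "[cl n x p (Suc j) = 1] (mod int p)"
    using m(3) c1 mp by (metis cong_pow cong_trans power_one)
  obtain N1 where N1: "N1 > 0" "[chebT_iter n N1 x = x] (mod int p^j)" using EX[OF j(1)] by blast
  have hx: "(ff n ^^ Nl n x p j) x = x + int p^j * tl' n x p j" by (rule hx_level[OF N1])
  have "\<not> int p dvd ((chebT_iter n (Nl n x p j * p) x - x) div int p^Suc j)"
    using level_good[OF prime p2 j(2) hx nt] c1 by (simp add: cl_def)
  then have "\<not> int p dvd tl' n x p (Suc j)" using m(2) mp by (simp add: tl'_def)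
  then show ?thesis using c1' j m(2) mp by (simp add: Good_def mult.commute)
qed

lemma inv_step:
  fixes p :: nat
  assumes prime: "prime p" and p2: "p > 2" and j: "1 \<le> j"
    and EX: "\<And>j. 1 \<le> j \<Longrightarrow> \<exists>N>0. [chebT_iter n N x = x] (mod int p^j)"
    and I: "Inv n x p j"
  shows "Inv n x p (Suc j)"
proof -
  obtain m where m: "m > 0" "Nl n x p (Suc j) = Nl n x p j * m"
    "[cl n x p (Suc j) = (cl n x p j)^m] (mod int p)"
    "int p dvd tl' n x p j \<Longrightarrow> m = 1"
    "\<not> int p dvd tl' n x p j \<Longrightarrow> [cl n x p j = 1] (mod int p) \<Longrightarrow> m = p"
    "\<not> int p dvd tl' n x p j \<Longrightarrow> \<not> [cl n x p j = 1] (mod int p) \<Longrightarrow> m \<le> p - 1 \<and> [(cl n x p j)^m = 1] (mod int p)"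
    using step_facts[OF prime j EX] by metis
  show ?thesis
  proof (cases "Good n x p j")
    case True then show ?thesis using good_step[OF prime p2 EX] by (simp add: Inv_def)
  next
    case NG: False
    show ?thesis
    proof (cases "int p dvd tl' n x p j")
      case True
      then have "m = 1" using m(4) by blast
      then have same: "Nl n x p (Suc j) = Nl n x p j" "[cl n x p (Suc j) = cl n x p j] (mod int p)"
        using m(2,3) by auto
      have eqc: "[cl n x p (Suc j) = 1] (mod int p) \<longleftrightarrow> [cl n x p j = 1] (mod int p)"
        using same(2) by (meson cong_sym cong_trans)
      show ?thesis using I NG same(1) eqc j unfolding Inv_def by auto
    next
      case nt: False
      show ?thesis
      proof (cases "[cl n x p j = 1] (mod int p)")
        case c1: True
        then have mp: "m = p" using m(5) nt by blast
        have "j = 1"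
        proof (rule ccontr)
          assume "j \<noteq> 1"
          then have "Good n x p j" using j nt c1 by (simp add: Good_def)
          then show False using NG by simp
        qed
        then have "Nl n x p j \<le> p - 1" using I NG c1 unfolding Inv_def by auto
        then have "Nl n x p (Suc j) \<le> p * (p - 1)" using m(2) mp by (simp add: mult.commute)
        moreover have "[cl n x p (Suc j) = 1] (mod int p)"
          using m(3) c1 mp by (metis cong_pow cong_trans power_one)
        ultimately show ?thesis using j by (simp add: Inv_def)
      next
        case c1: False
        then have mm: "m \<le> p - 1" "[(cl n x p j)^m = 1] (mod int p)" using m(6) nt by auto
        have "Nl n x p j \<le> p - 1" using I NG c1 unfolding Inv_def by auto
        then have "Nl n x p (Suc j) \<le> (p - 1) * (p - 1)" using m(2) mm(1) by (simp add: mult_le_mono)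
        also have "\<dots> \<le> p * (p - 1)" by simp
        finally have "Nl n x p (Suc j) \<le> p * (p - 1)" .
        moreover have "[cl n x p (Suc j) = 1] (mod int p)" using m(3) mm(2) by (metis cong_trans)
        ultimately show ?thesis using j by (simp add: Inv_def)
      qed
    qed
  qed
qed

lemma inv_all:
  fixes p :: nat
  assumes prime: "prime p" and p2: "p > 2"
    and EX: "\<And>j. 1 \<le> j \<Longrightarrow> \<exists>N>0. [chebT_iter n N x = x] (mod int p^j)"
  shows "1 \<le> j \<Longrightarrow> Inv n x p j"
proof (induction j rule: dec_induct)
  case base
  obtain N1 where N1: "N1 > 0" "[chebT_iter n N1 x = x] (mod int p^1)" using EX[of 1] by blast
  have "Nl n x p 1 \<le> p - 1" using period1_bound[OF prime N1(1)] N1(2) by (simp add: Nl_def)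
  moreover have "p - 1 \<le> p * (p - 1)" using prime prime_gt_0_nat by simp
  ultimately have "Nl n x p 1 \<le> p * (p - 1)" by (rule order_trans)
  with \<open>Nl n x p 1 \<le> p - 1\<close> show ?case unfolding Inv_def by blast
next
  case (step j)
  then show ?case using inv_step[OF prime p2 _ EX] by simp
qed

definition QD :: "int \<Rightarrow> int poly" where "QD D = [:-D, 0, 1:]"
definition cst :: "int \<Rightarrow> int poly" where "cst M = [:M:]"

lemma cst_mult: "cst (a * b) = cst a * cst b" by (simp add: cst_def)
lemma cst_0[simp]: "cst 0 = 0" by (simp add: cst_def)

definition qc :: "int \<Rightarrow> int \<Rightarrow> int poly \<Rightarrow> int poly \<Rightarrow> bool" where
  "qc D M f g \<longleftrightarrow> (\<exists>a b. f - g = QD D * a + cst M * b)"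

lemma qc_refl: "qc D M f f"
  unfolding qc_def by (rule exI[of _ 0], rule exI[of _ 0]) simp

lemma qc_sym: "qc D M f g \<Longrightarrow> qc D M g f"
  unfolding qc_def by (metis (no_types, opaque_lifting) minus_diff_eq minus_add_distrib mult_minus_right)

lemma qc_trans: "qc D M f g \<Longrightarrow> qc D M g h \<Longrightarrow> qc D M f h"
  unfolding qc_def
proof (elim exE)
  fix a b a' b'
  assume 1: "f - g = QD D * a + cst M * b" and 2: "g - h = QD D * a' + cst M * b'"
  have "f - h = QD D * (a + a') + cst M * (b + b')"
    using arg_cong2[OF 1 2, of "(+)"] by (simp add: algebra_simps)
  then show "\<exists>a b. f - h = QD D * a + cst M * b" by blast
qed

lemmas [trans] = qc_trans

lemma qc_add: "qc D M f g \<Longrightarrow> qc D M f' g' \<Longrightarrow> qc D M (f + f') (g + g')"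
  unfolding qc_def
proof (elim exE)
  fix a b a' b'
  assume 1: "f - g = QD D * a + cst M * b" and 2: "f' - g' = QD D * a' + cst M * b'"
  have "(f + f') - (g + g') = QD D * (a + a') + cst M * (b + b')"
    using arg_cong2[OF 1 2, of "(+)"] by (simp add: algebra_simps)
  then show "\<exists>a b. (f + f') - (g + g') = QD D * a + cst M * b" by blast
qed

lemma qc_neg: "qc D M f g \<Longrightarrow> qc D M (- f) (- g)"
  unfolding qc_def by (metis (no_types, opaque_lifting) minus_diff_eq minus_add_distrib mult_minus_right diff_minus_eq_add uminus_add_conv_diff)

lemma qc_diff: "qc D M f g \<Longrightarrow> qc D M f' g' \<Longrightarrow> qc D M (f - f') (g - g')"
  using qc_add[OF _ qc_neg] by (metis diff_conv_add_uminus)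

lemma qc_mult: "qc D M f g \<Longrightarrow> qc D M f' g' \<Longrightarrow> qc D M (f * f') (g * g')"
  unfolding qc_def
proof (elim exE)
  fix a b a' b'
  assume 1: "f - g = QD D * a + cst M * b" and 2: "f' - g' = QD D * a' + cst M * b'"
  have "f * f' - g * g' = (f - g) * f' + g * (f' - g')" by (simp add: algebra_simps)
  also have "\<dots> = QD D * (a * f' + g * a') + cst M * (b * f' + g * b')"
    unfolding 1 2 by (simp add: algebra_simps)
  finally show "\<exists>a b. f * f' - g * g' = QD D * a + cst M * b" by blast
qed

lemma qc_pow: "qc D M f g \<Longrightarrow> qc D M (f^k) (g^k)"
  by (induction k) (auto intro: qc_mult qc_refl)

lemma qc_0: "qc D 0 f g \<Longrightarrow> qc D M f g"
  unfolding qc_def by (metis add.right_neutral mult_zero_left mult_zero_right cst_0)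

lemma qc_dvd: "M' dvd M \<Longrightarrow> qc D M f g \<Longrightarrow> qc D M' f g"
  unfolding qc_def
proof (elim exE dvdE)
  fix a b k
  assume "M = M' * k" "f - g = QD D * a + cst M * b"
  then have "f - g = QD D * a + cst M' * (cst k * b)" by (simp add: cst_mult algebra_simps)
  then show "\<exists>a b. f - g = QD D * a + cst M' * b" by blast
qed

lemma qc_Q: "qc D 0 (QD D * a + f) f"
  unfolding qc_def by (rule exI[of _ a], rule exI[of _ 0]) simp

lemma qc_const: "[a = b] (mod M) \<Longrightarrow> qc D M [:a, c:] [:b, c:]"
  unfolding qc_def cong_iff_lin
proof (elim exE)
  fix k assume "b = a + M * k"
  then have "[:a, c:] - [:b, c:] = QD D * 0 + cst M * [:-k:]" by (simp add: cst_def)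
  then show "\<exists>aa ba. [:a, c:] - [:b, c:] = QD D * aa + cst M * ba" by blast
qed

lemma reduce_Q: "\<exists>q r0 r1. b = QD D * q + [:r0, r1:]"
proof (induction b rule: pCons_induct)
  case 0 then show ?case by (rule exI[of _ 0]) auto
next
  case (pCons c b)
  then obtain q r0 r1 where h: "b = QD D * q + [:r0, r1:]" by blast
  have "pCons c b = QD D * (pCons 0 q + [:r1:]) + [:c + r1 * D, r0:]"
    unfolding h QD_def by (simp add: algebra_simps)
  then show ?case by blast
qed


lemma QD_nz: "QD D \<noteq> 0" by (simp add: QD_def)
lemma degree_QD: "degree (QD D) = 2" by (simp add: QD_def)

lemma qc_extract:
  assumes "qc D M [:a0, a1:] [:b0, b1:]"
  shows "M dvd a0 - b0 \<and> M dvd a1 - b1"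
proof -
  obtain a b where ab: "[:a0, a1:] - [:b0, b1:] = QD D * a + cst M * b" using assms by (auto simp: qc_def)
  obtain q r0 r1 where b: "b = QD D * q + [:r0, r1:]" using reduce_Q by blast
  have eq: "[:a0 - b0 - M * r0, a1 - b1 - M * r1:] = QD D * (a + cst M * q)"
  proof -
    have "[:a0 - b0 - M * r0, a1 - b1 - M * r1:] = ([:a0, a1:] - [:b0, b1:]) - cst M * [:r0, r1:]"
      by (simp add: cst_def)
    also have "\<dots> = QD D * (a + cst M * q)" unfolding ab b by (simp add: algebra_simps)
    finally show ?thesis .
  qed
  have z: "a + cst M * q = 0"
  proof (rule ccontr)
    assume nz: "a + cst M * q \<noteq> 0"
    have "degree (QD D * (a + cst M * q)) = 2 + degree (a + cst M * q)"
      using degree_mult_eq[OF QD_nz nz] degree_QD by simp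
    moreover have "degree [:a0 - b0 - M * r0, a1 - b1 - M * r1:] \<le> 1"
      by (metis One_nat_def degree_pCons_le degree_pCons_0)
    ultimately show False using eq by simp
  qed
  then have "[:a0 - b0 - M * r0, a1 - b1 - M * r1:] = 0" using eq by simp
  then have "a0 - b0 = M * r0" "a1 - b1 = M * r1" by auto
  then show ?thesis by simp
qed

fun cU :: "int \<Rightarrow> nat \<Rightarrow> int" where
  "cU z 0 = 0"
| "cU z (Suc 0) = 1"
| "cU z (Suc (Suc m)) = 2 * z * cU z (Suc m) - cU z m"

lemma qc_cheb_pow:
  assumes v: "qc D 0 (v * v) ([:2 * z:] * v - 1)" and v1: "qc D 0 v [:z, s:]"
  shows "qc D 0 (v^m) [:poly (chebT m) z, s * cU z m:]"
proof (induction m rule: chebT.induct)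
  case 1 then show ?case by (simp add: qc_refl one_pCons)
next
  case 2 then show ?case using v1 by simp
next
  case (3 d)
  have "v ^ Suc (Suc d) = (v * v) * v^d" by (simp add: algebra_simps)
  also have "qc D 0 \<dots> (([:2 * z:] * v - 1) * v^d)" by (rule qc_mult[OF v qc_refl])
  also have "([:2 * z:] * v - 1) * v^d = [:2 * z:] * v^Suc d - v^d" by (simp add: algebra_simps)
  also have "qc D 0 \<dots> ([:2 * z:] * [:poly (chebT (Suc d)) z, s * cU z (Suc d):] - [:poly (chebT d) z, s * cU z d:])"
    by (intro qc_diff qc_mult qc_refl 3)
  also have "[:2 * z:] * [:poly (chebT (Suc d)) z, s * cU z (Suc d):] - [:poly (chebT d) z, s * cU z d:]
     = [:poly (chebT (Suc (Suc d))) z, s * cU z (Suc (Suc d)):]"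
    by (simp add: algebra_simps)
  finally show ?case .
qed

lemma qc_eqI: "f = QD D * a + g \<Longrightarrow> qc D 0 f g"
  using qc_Q by simp

lemma cheb_comp: "poly (chebT a) (poly (chebT b) y) = poly (chebT (a*b)) (y::int)"
proof -
  define D where "D = y^2 - 1"
  define u where "u = [:y, 1:]"
  define ub where "ub = [:y, -1:]"
  have hu: "qc D 0 (u*u) ([:2*y:]*u - 1)"
    by (rule qc_eqI[where a=1]) (simp add: u_def QD_def D_def power2_eq_square one_pCons)
  have hub: "qc D 0 (ub*ub) ([:2*y:]*ub - 1)"
    by (rule qc_eqI[where a=1]) (simp add: ub_def QD_def D_def power2_eq_square one_pCons)
  have huu: "qc D 0 (u*ub) 1"
    by (rule qc_eqI[where a="-1"]) (simp add: u_def ub_def QD_def D_def power2_eq_square one_pCons)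
  define z where "z = poly (chebT b) y"
  define s where "s = cU y b"
  have pu: "qc D 0 (u^b) [:z, s:]"
    using qc_cheb_pow[OF hu, of 1 b] by (simp add: u_def qc_refl z_def s_def)
  have pub: "qc D 0 (ub^b) [:z, -s:]"
    using qc_cheb_pow[OF hub, of "-1" b] by (simp add: ub_def qc_refl z_def s_def)
  have "qc D 0 ((u*ub)^b) 1" using qc_pow[OF huu, of b] by simp
  then have "qc D 0 ([:z, s:] * [:z, -s:]) 1"
    using qc_mult[OF pu pub] by (metis power_mult_distrib qc_sym qc_trans)
  moreover have "[:z, s:] * [:z, -s:] = QD D * [:-(s^2):] + [:z^2 - D * s^2, 0:]"
    by (simp add: QD_def power2_eq_square algebra_simps)
  ultimately have "qc D 0 [:z^2 - D * s^2, 0:] [:1, 0:]"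
    by (metis qc_sym qc_trans qc_eqI one_pCons pCons_0_0)
  then have norm: "z^2 - D * s^2 = 1" using qc_extract by fastforce
  define v where "v = [:z, s:]"
  have hv: "qc D 0 (v*v) ([:2*z:]*v - 1)"
  proof (rule qc_eqI[where a="[:s^2:]"])
    have "1 - z^2 + D * s^2 = 0" using norm by simp
    then show "v * v = QD D * [:s^2:] + ([:2 * z:] * v - 1)"
      by (simp add: v_def QD_def power2_eq_square algebra_simps one_pCons)
  qed
  have "qc D 0 (u^(a*b)) [:poly (chebT (a*b)) y, 1 * cU y (a*b):]"
    using qc_cheb_pow[OF hu, of 1 "a*b"] by (simp add: u_def qc_refl)
  moreover have "u^(a*b) = (u^b)^a" by (subst mult.commute) (rule power_mult)
  moreover have "qc D 0 ((u^b)^a) (v^a)" using qc_pow[OF pu] by (simp add: v_def)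
  moreover have "qc D 0 (v^a) [:poly (chebT a) z, s * cU z a:]"
    using qc_cheb_pow[OF hv, of s a] by (simp add: v_def qc_refl)
  ultimately have "qc D 0 [:poly (chebT (a*b)) y, 1 * cU y (a*b):] [:poly (chebT a) z, s * cU z a:]"
    by (metis qc_sym qc_trans)
  then show ?thesis using qc_extract by (fastforce simp: z_def)
qed

lemma iter_eq_cheb: "chebT_iter n N y = poly (chebT (n^N)) y"
proof (induction N arbitrary: y)
  case 0 then show ?case by (simp add: chebT_iter_def)
next
  case (Suc N)
  have "chebT_iter n (Suc N) y = poly (chebT n) (chebT_iter n N y)" by (simp add: chebT_iter_def)
  also have "\<dots> = poly (chebT (n * n^N)) y" by (simp add: Suc.IH cheb_comp)
  finally show ?case by simp
qed

lemma qc_const2: "[a0 = b0] (mod M) \<Longrightarrow> [a1 = b1] (mod M) \<Longrightarrow> qc D M [:a0, a1:] [:b0, b1:]"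
  unfolding qc_def cong_iff_lin
proof (elim exE)
  fix k l assume "b0 = a0 + M * k" "b1 = a1 + M * l"
  then have "[:a0, a1:] - [:b0, b1:] = QD D * 0 + cst M * [:-k, -l:]" by (simp add: cst_def)
  then show "\<exists>aa ba. [:a0, a1:] - [:b0, b1:] = QD D * aa + cst M * ba" by blast
qed

lemma const_pow: "[:c:]^k = [:c^k:]"
  by (induction k) (auto simp: one_pCons mult.commute)

lemma of_nat_cst: "(of_nat k :: int poly) = cst (int k)"
  by (simp add: cst_def of_nat_poly)

lemma freshman:
  fixes a b :: "int poly" and p :: nat
  assumes prime: "prime p"
  shows "\<exists>W. (a + b)^p = a^p + b^p + cst (int p) * W"
proof -
  define g where "g k = (of_nat (p choose k) :: int poly) * a^k * b^(p-k)" for k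
  define Wt where "Wt = (\<Sum>k\<in>{1..<p}. (of_nat ((p choose k) div p) :: int poly) * a^k * b^(p-k))"
  have p0: "p > 0" using prime prime_gt_0_nat by blast
  have split: "{..p} = insert p (insert 0 {1..<p})" using p0 by auto
  have "(a + b)^p = (\<Sum>k\<le>p. g k)" unfolding g_def by (rule binomial_ring)
  also have "\<dots> = g p + (g 0 + (\<Sum>k\<in>{1..<p}. g k))"
    unfolding split using p0 by (simp add: sum.insert)
  also have "(\<Sum>k\<in>{1..<p}. g k) = cst (int p) * Wt"
    unfolding Wt_def sum_distrib_left
  proof (rule sum.cong[OF refl])
    fix k assume k: "k \<in> {1..<p}"
    have "p dvd (p choose k)" using k p0 prime by (intro dvd_choose_prime) auto
    then have "p choose k = p * ((p choose k) div p)" by simp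
    then have "(of_nat (p choose k) :: int poly) = of_nat p * of_nat ((p choose k) div p)"
      by (metis of_nat_mult)
    then show "g k = cst (int p) * (of_nat ((p choose k) div p) * a^k * b^(p-k))"
      unfolding g_def of_nat_cst[of p] by (simp add: algebra_simps)
  qed
  finally have eq: "(a + b)^p = g p + (g 0 + cst (int p) * Wt)" .
  have "g p = a^p" "g 0 = b^p" by (simp_all add: g_def)
  then show ?thesis using eq by (intro exI[of _ Wt]) (simp add: add.assoc)
qed

lemma fermat_int2:
  fixes x :: int and p :: nat
  assumes prime: "prime p"
  shows "[x^p = x] (mod int p)"
proof (cases "int p dvd x")
  case True
  then have "[x = 0] (mod int p)" by (simp add: cong_0_iff)
  moreover then have "[x^p = 0^p] (mod int p)" by (rule cong_pow)
  moreover have "(0::int)^p = 0" using prime prime_gt_0_nat by simp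
  ultimately show ?thesis by (metis cong_sym cong_trans)
next
  case False
  then have "[x^(p-1) = 1] (mod int p)" using fermat_int prime by blast
  then have "[x * x^(p-1) = x * 1] (mod int p)" by (rule cong_mult[OF cong_refl])
  moreover have "x * x^(p-1) = x^p" using prime prime_gt_0_nat by (cases p) simp_all
  ultimately show ?thesis by simp
qed

lemma frob:
  fixes x :: int and p :: nat
  assumes prime: "prime p" and odd: "odd p" and D: "D = x^2 - 1"
  shows "qc D (int p) ([:x, 1:]^p) [:x, D^((p-1) div 2):]"
proof -
  define h where "h = (p - 1) div 2"
  have ph: "p = Suc (2 * h)" using odd unfolding h_def by presburger
  obtain W where W: "([:x:] + [:0, 1:])^p = [:x:]^p + [:0, 1:]^p + cst (int p) * W"
    using freshman[OF prime] by blast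
  have u: "[:x, 1:] = [:x:] + [:0, 1:]" by simp
  have "qc D (int p) ([:x, 1:]^p) ([:x:]^p + [:0, 1:]^p)"
    unfolding qc_def u W by (rule exI[of _ 0], rule exI[of _ W]) simp
  moreover have "qc D 0 ([:0, 1:]^p) [:0, D^h:]"
  proof -
    have sq: "qc D 0 ([:0, 1:]^2) [:D:]"
      by (rule qc_eqI[where a=1]) (simp add: QD_def power2_eq_square)
    have "[:0, 1:]^p = [:0, 1:] * ([:0, 1:]^2)^h" by (simp add: ph power_mult[symmetric])
    also have "qc D 0 \<dots> ([:0, 1:] * [:D:]^h)" by (intro qc_mult qc_refl qc_pow sq)
    also have "[:0, 1:] * [:D:]^h = [:0, D^h:]" by (simp add: const_pow)
    finally show ?thesis .
  qed
  ultimately have "qc D (int p) ([:x, 1:]^p) ([:x:]^p + [:0, D^h:])"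
    by (meson qc_0 qc_add qc_refl qc_trans)
  also have "[:x:]^p + [:0, D^h:] = [:x^p, D^h:]" by (simp add: const_pow)
  also have "qc D (int p) \<dots> [:x, D^h:]" by (intro qc_const2 fermat_int2 prime cong_refl)
  finally show ?thesis unfolding h_def .
qed

lemma qc_pow_one: "qc D M (v^e) 1 \<Longrightarrow> qc D M (v^(e*k)) 1"
  using qc_pow[of D M "v^e" 1 k] by (simp add: power_mult)

lemma u_order_modp:
  fixes x :: int and p :: nat
  assumes prime: "prime p" and p2: "p > 2" and D: "D = x^2 - 1"
  shows "qc D (int p) ([:x, 1:]^(2*p*(p-1)*(p+1))) 1"
proof -
  define u where "u = [:x, 1:]"
  define ub where "ub = [:x, -1:]"
  define h where "h = (p - 1) div 2"
  have odd: "odd p" using prime p2 by (rule prime_odd_nat)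
  have h1: "h \<ge> 1" using p2 by (simp add: h_def)
  have ph: "2 * h = p - 1" using odd unfolding h_def by presburger
  have huu: "qc D 0 (u*ub) 1"
    by (rule qc_eqI[where a="-1"]) (simp add: u_def ub_def QD_def D power2_eq_square one_pCons)
  have F: "qc D (int p) (u^p) [:x, D^h:]" using frob[OF prime odd D] by (simp add: u_def h_def)
  have pp: "prime (int p)" using prime by simp
  show ?thesis
  proof (cases "int p dvd D")
    case True
    then have "int p dvd D^h" using h1 by (metis dvd_power dvd_trans not_one_le_zero le_zero_eq neq0_conv)
    then have "qc D (int p) [:x, D^h:] [:x, 0:]" by (intro qc_const2 cong_refl) (simp add: cong_0_iff)
    with F have F0: "qc D (int p) (u^p) [:x:]" by (metis qc_trans pCons_0_0)
    have "[x^2 = 1] (mod int p)" using True D by (simp add: cong_iff_dvd_diff)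
    then have "qc D (int p) [:x^2, 0:] [:1, 0:]" by (intro qc_const2 cong_refl)
    then have X: "qc D (int p) [:x^2:] 1" by (simp add: one_pCons)
    have "u^(2*p) = (u^p)^2" by (simp add: power_mult[symmetric] mult.commute)
    also have "qc D (int p) \<dots> ([:x:]^2)" by (rule qc_pow[OF F0])
    also have "[:x:]^2 = [:x^2:]" by (rule const_pow)
    also have "qc D (int p) \<dots> 1" by (rule X)
    finally have "qc D (int p) (u^(2*p)) 1" .
    then have "qc D (int p) (u^(2*p*((p-1)*(p+1)))) 1" by (rule qc_pow_one)
    moreover have "2*p*(p-1)*(p+1) = 2*p*((p-1)*(p+1))" by (simp only: mult.assoc)
    ultimately show ?thesis by (simp only: u_def)
  next
    case False
    then have "[D^(p-1) = 1] (mod int p)" using fermat_int prime by blast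
    moreover have "D^(p-1) = D^h * D^h"
    proof -
      have "p - 1 = h + h" using ph by simp
      then show ?thesis by (simp only: power_add)
    qed
    moreover have "(D^h - 1) * (D^h + 1) = D^h * D^h - 1" by (simp add: algebra_simps)
    ultimately have "int p dvd (D^h - 1) * (D^h + 1)"
      by (simp add: cong_iff_dvd_diff)
    then have "int p dvd D^h - 1 \<or> int p dvd D^h + 1" using pp by (simp add: prime_dvd_mult_iff)
    then show ?thesis
    proof
      assume "int p dvd D^h - 1"
      then have "qc D (int p) [:x, D^h:] [:x, 1:]" by (intro qc_const2 cong_refl) (simp add: cong_iff_dvd_diff)
      with F have Fu: "qc D (int p) (u^p) u" unfolding u_def by (rule qc_trans)
      have "u^(p-1) = u^(p-1) * 1" by simp
      also have "qc D (int p) \<dots> (u^(p-1) * (u * ub))" by (rule qc_mult[OF qc_refl qc_0[OF qc_sym[OF huu]]])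
      also have "u^(p-1) * (u * ub) = u^p * ub"
      proof -
        have "p = Suc (p - 1)" using prime_gt_0_nat[OF prime] by simp
        then have "u^p = u^(p-1) * u" by (metis power_Suc2)
        then show ?thesis by (simp add: mult.assoc)
      qed
      also have "qc D (int p) \<dots> (u * ub)" by (intro qc_mult qc_refl Fu)
      also have "qc D (int p) \<dots> 1" by (rule qc_0[OF huu])
      finally have "qc D (int p) (u^(p-1)) 1" .
      then have "qc D (int p) (u^((p-1)*(2*p*(p+1)))) 1" by (rule qc_pow_one)
      moreover have "(p-1)*(2*p*(p+1)) = 2*p*(p-1)*(p+1)" by (simp only: ac_simps)
      ultimately show ?thesis by (simp only: u_def)
    next
      assume "int p dvd D^h + 1"
      then have "qc D (int p) [:x, D^h:] [:x, -1:]" by (intro qc_const2 cong_refl) (simp add: cong_iff_dvd_diff)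
      with F have Fu: "qc D (int p) (u^p) ub" unfolding ub_def by (rule qc_trans)
      have "u^(p+1) = u^p * u" by simp
      also have "qc D (int p) \<dots> (ub * u)" by (intro qc_mult qc_refl Fu)
      also have "ub * u = u * ub" by (simp add: mult.commute)
      also have "qc D (int p) \<dots> 1" by (rule qc_0[OF huu])
      finally have "qc D (int p) (u^(p+1)) 1" .
      then have "qc D (int p) (u^((p+1)*(2*p*(p-1)))) 1" by (rule qc_pow_one)
      moreover have "(p+1)*(2*p*(p-1)) = 2*p*(p-1)*(p+1)" by (simp only: ac_simps)
      ultimately show ?thesis by (simp only: u_def)
    qed
  qed
qed

lemma binom_sq_bound: "\<exists>R. (1 + w)^m = 1 + of_nat m * w + w * w * (R :: int poly)"
proof (induction m)
  case 0 then show ?case by (rule exI[of _ 0]) simp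
next
  case (Suc m)
  then obtain R where R: "(1 + w)^m = 1 + of_nat m * w + w * w * R" by blast
  have "(1 + w)^Suc m = 1 + of_nat (Suc m) * w + w * w * (of_nat m + R + R * w)"
    by (simp add: R algebra_simps)
  then show ?case by blast
qed

lemma lift_step:
  fixes p :: nat
  assumes j: "1 \<le> j" and v: "qc D (int p ^ j) v 1"
  shows "qc D (int p ^ Suc j) (v^p) 1"
proof -
  obtain a b where ab: "v - 1 = QD D * a + cst (int p ^ j) * b" using v by (auto simp: qc_def)
  define w where "w = cst (int p ^ j) * b"
  have "qc D 0 v (1 + w)" by (rule qc_eqI[where a=a]) (use ab in \<open>simp add: w_def algebra_simps\<close>)
  then have v1: "qc D 0 (v^p) ((1 + w)^p)" by (rule qc_pow)
  obtain R where R: "(1 + w)^p = 1 + of_nat p * w + w * w * R" using binom_sq_bound by blast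
  have pj: "int p ^ j * int p ^ j = int p ^ Suc j * int p ^ (j - 1)"
  proof -
    have "j + j = Suc j + (j - 1)" using j by simp
    then show ?thesis by (metis power_add)
  qed
  have SAB: "cst (int p ^ Suc j) = cst (int p) * cst (int p ^ j)" by (simp add: cst_mult[symmetric])
  have BB: "cst (int p ^ j) * cst (int p ^ j) = cst (int p ^ Suc j) * cst (int p ^ (j - 1))"
    by (simp only: cst_mult[symmetric] pj)
  have "(1 + w)^p - 1 = cst (int p) * (cst (int p ^ j) * b) + (cst (int p ^ j) * cst (int p ^ j)) * (b * b * R)"
    unfolding R unfolding w_def of_nat_cst by (simp add: algebra_simps)
  also have "\<dots> = QD D * 0 + cst (int p ^ Suc j) * (b + cst (int p ^ (j - 1)) * b * b * R)"
    unfolding BB SAB by (simp add: algebra_simps)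
  finally have "(1 + w)^p - 1 = QD D * 0 + cst (int p ^ Suc j) * (b + cst (int p ^ (j - 1)) * b * b * R)" .
  then have "qc D (int p ^ Suc j) ((1 + w)^p) 1" unfolding qc_def by blast
  with qc_0[OF v1] show ?thesis by (rule qc_trans)
qed

lemma lift_all:
  fixes p :: nat
  assumes v: "qc D (int p) v 1"
  shows "1 \<le> j \<Longrightarrow> qc D (int p ^ j) (v^(p^(j-1))) 1"
proof (induction j rule: dec_induct)
  case base then show ?case using v by simp
next
  case (step j)
  have "qc D (int p ^ Suc j) ((v^(p^(j-1)))^p) 1" by (rule lift_step[OF step.hyps(1) step.IH])
  moreover have "(v^(p^(j-1)))^p = v^(p^(Suc j - 1))"
  proof -
    have "p^(Suc j - 1) = p^(j-1) * p" using step.hyps(1) by (cases j) auto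
    then show ?thesis by (simp add: power_mult)
  qed
  ultimately show ?case by simp
qed

lemma E0_gt1: "(p::nat) > 1 \<Longrightarrow> 2*p*(p-1)*(p+1) > 1"
proof -
  assume p1: "p > 1"
  have a: "(p-1)*(p+1) \<ge> 1" using p1 by simp
  have "(2*p)*1 \<le> (2*p)*((p-1)*(p+1))" using a by (rule mult_le_mono2)
  moreover have "2*p*(p-1)*(p+1) = (2*p)*((p-1)*(p+1))" by (simp only: mult.assoc)
  ultimately have b: "2*p \<le> 2*p*(p-1)*(p+1)" by (simp only: mult_1_right)
  have "1 < 2*p" using p1 by simp
  then show ?thesis using b by (rule less_le_trans)
qed

lemma coprime_E:
  fixes p n :: nat
  assumes prime: "prime p" and p2: "p > 2" and cp: "gcd n p = 1" and cq: "gcd n (p^2 - 1) = 1"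
  shows "coprime n (2*p*(p-1)*(p+1) * p^k)"
proof -
  have sq: "p^2 - 1 = (p - 1) * (p + 1)"
    by (cases p) (auto simp: power2_eq_square)
  have cop_q: "coprime n ((p-1)*(p+1))" using cq unfolding sq by (simp only: coprime_iff_gcd_eq_1)
  have cop_p: "coprime n p" using cp by (simp only: coprime_iff_gcd_eq_1)
  have "even (p - 1)" using prime_odd_nat[OF prime p2] by simp
  then have "2 dvd (p-1)*(p+1)" by simp
  then obtain k' where "(p-1)*(p+1) = 2 * k'" by (metis dvdE)
  then have cop_2: "coprime n 2" using cop_q by simp
  have "coprime n (p^k)" using cop_p by (simp only: coprime_power_right_iff simp_thms)
  then have "coprime n (2*p*((p-1)*(p+1)) * p^k)" using cop_2 cop_p cop_q
    by (simp only: coprime_mult_right_iff simp_thms)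
  then show ?thesis by (simp only: mult.assoc)
qed

lemma existence:
  fixes p n :: nat and x :: int
  assumes prime: "prime p" and p2: "p > 2" and cp: "gcd n p = 1" and cq: "gcd n (p^2 - 1) = 1"
    and j: "1 \<le> j"
  shows "\<exists>N>0. [chebT_iter n N x = x] (mod int p^j)"
proof -
  define D where "D = x^2 - 1"
  define u where "u = [:x, 1:]"
  define E0 where "E0 = 2*p*(p-1)*(p+1)"
  define E where "E = E0 * p^(j-1)"
  have uE: "qc D (int p ^ j) (u^E) 1"
    using lift_all[OF u_order_modp[OF prime p2 D_def] j] unfolding E_def E0_def u_def power_mult .
  have p1: "p > 1" using prime prime_gt_1_nat by blast
  have E0pos: "E0 > 1" unfolding E0_def using p1 by (rule E0_gt1)
  have "p^(j-1) \<ge> 1" using p1 by simp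
  then have "E0 * 1 \<le> E" unfolding E_def by (rule mult_le_mono2)
  then have Epos: "E > 1" using E0pos by simp
  have copE: "coprime n E" unfolding E_def E0_def by (rule coprime_E[OF prime p2 cp cq])
  define N where "N = totient E"
  have N0: "N > 0" using Epos by (simp add: N_def)
  have "[n^N = 1] (mod E)" unfolding N_def by (rule euler_theorem[OF copE])
  then have "n^N mod E = 1" using Epos by (simp add: cong_def)
  then have M: "n^N = 1 + E * (n^N div E)" by (metis add.commute div_mult_mod_eq mult.commute)
  define q where "q = n^N div E"
  have "u^(n^N) = u^(1 + E*q)" using M unfolding q_def by simp
  also have "\<dots> = u * (u^E)^q" by (simp add: power_add power_mult)
  finally have "u^(n^N) = u * (u^E)^q" .
  moreover have "qc D (int p ^ j) (u * (u^E)^q) (u * 1^q)" by (rule qc_mult[OF qc_refl qc_pow[OF uE]])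
  ultimately have A: "qc D (int p ^ j) (u^(n^N)) u" by simp
  have hu: "qc D 0 (u*u) ([:2*x:]*u - 1)"
    by (rule qc_eqI[where a=1]) (simp add: u_def QD_def D_def power2_eq_square one_pCons)
  have B: "qc D 0 (u^(n^N)) [:poly (chebT (n^N)) x, 1 * cU x (n^N):]"
    using qc_cheb_pow[OF hu, of 1 "n^N"] by (simp add: u_def qc_refl)
  have "qc D (int p ^ j) [:poly (chebT (n^N)) x, 1 * cU x (n^N):] [:x, 1:]"
    using qc_trans[OF qc_sym[OF qc_0[OF B]] A] by (simp add: u_def)
  then have "int p ^ j dvd poly (chebT (n^N)) x - x" using qc_extract by blast
  then have "[chebT_iter n N x = x] (mod int p^j)" by (simp add: iter_eq_cheb cong_iff_dvd_diff)
  then show ?thesis using N0 by blast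
qed

lemma good_from_big:
  fixes p :: nat
  assumes prime: "prime p" and p2: "p > 2"
    and EX: "\<And>j. 1 \<le> j \<Longrightarrow> \<exists>N>0. [chebT_iter n N x = x] (mod int p^j)"
    and w: "1 \<le> w" and big: "Nl n x p w \<ge> p^2"
  shows "Good n x p w"
proof -
  have I: "Inv n x p w" using inv_all[OF prime p2 EX w] .
  have "p * (p - 1) < p^2" using p2 by (simp add: power2_eq_square)
  moreover have "p - 1 \<le> p * (p - 1)" using p2 by simp
  ultimately show ?thesis using I big unfolding Inv_def by linarith
qed

lemma growth:
  fixes p :: nat
  assumes prime: "prime p" and p2: "p > 2"
    and EX: "\<And>j. 1 \<le> j \<Longrightarrow> \<exists>N>0. [chebT_iter n N x = x] (mod int p^j)"
    and G: "Good n x p w"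
  shows "w \<le> k \<Longrightarrow> Good n x p k \<and> Nl n x p k = Nl n x p w * p^(k - w)"
proof (induction k rule: dec_induct)
  case base then show ?case using G by simp
next
  case (step k)
  have "Good n x p (Suc k) \<and> Nl n x p (Suc k) = p * Nl n x p k"
    using good_step[OF prime p2 EX] step.IH by blast
  moreover have "Suc k - w = Suc (k - w)" using step.hyps(1) by simp
  ultimately show ?case using step.IH by (simp add: mult.commute mult.left_commute)
qed

theorem corollary1:
  fixes p n w :: nat and x :: int
  assumes "prime p" and "p > 3" and "n > 1"
    and "gcd n p = 1" and "gcd n (p^2 - 1) = 1"
    and "x \<ge> 0" and "w > 0"
    and "cheb_period n x (int p ^ w) \<ge> p^2"
  shows "\<forall>k\<ge>w. cheb_period n x (int p ^ k) = cheb_period n x (int p ^ w) * p ^ (k - w)"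
proof (intro allI impI)
  fix k assume k: "w \<le> k"
  have p2: "p > 2" using assms(2) by simp
  have EX: "\<And>j. 1 \<le> j \<Longrightarrow> \<exists>N>0. [chebT_iter n N x = x] (mod int p^j)"
    using existence[OF assms(1) p2 assms(4) assms(5)] by blast
  have G: "Good n x p w"
    using good_from_big[OF assms(1) p2 EX] assms(7,8) by (simp add: Nl_def)
  show "cheb_period n x (int p ^ k) = cheb_period n x (int p ^ w) * p ^ (k - w)"
    using growth[OF assms(1) p2 EX G k] by (simp add: Nl_def)
qed

end
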